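(* Let $X$ be the vertex set of a connected simplicial graph with bounded geometry, equipped with the shortest path metric, which is $\delta$-hyperbolic, and fix $e\in X$ and $p\geq 1$. For $x\in X$, $k\in\mathbb{N}$, $n\in\mathbb{N}\setminus\{0\}$, let $F_{x,k,n}$ be the set of all points of $X\setminus B(e;3\delta)$ lying on $g([n,2n])$ for some geodesic $g$ from some $y$ with $d(x,y)\leq k$ to $e$ (parametrised by arc length starting at $y$), let $F(x,k,n)\in\ell^p(X)$ be its characteristic function, and set $H(x,n)=\frac{1}{n}\sum_{0\leq k\leq n/4}F(x,k,n)$. Then $\|H(x,n)\|_p^p\preceq n$ for all $x\in X$, $n\geq 1$, and $\|H(x,n)\|_p^p\asymp n$ for all $x,n$ with $d(x,e)\geq 2n$.
   Context: Bounded geometry: for every $r$ there is a uniform bound on the cardinality of balls of radius $r$. $\delta$-hyperbolicity in the Rips sense. $A\preceq B$ means there is a constant $C$ (independent of $x,n$) with $A\leq CB+C$; $A\asymp B$ means $A\preceq B$ and $B\preceq A$. *)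

theory Defs
  imports "HOL-Analysis.Analysis"
begin

text \<open>Simple graphs on the vertex type 'a given by an adjacency relation E.
  The vertex set X is the whole type 'a.\<close>

definition simplicial_graph :: "('a \<Rightarrow> 'a \<Rightarrow> bool) \<Rightarrow> bool" where
  "simplicial_graph E \<longleftrightarrow> (\<forall>x y. E x y \<longrightarrow> E y x) \<and> (\<forall>x. \<not> E x x)"

definition walk :: "('a \<Rightarrow> 'a \<Rightarrow> bool) \<Rightarrow> 'a list \<Rightarrow> bool" where
  "walk E xs \<longleftrightarrow> xs \<noteq> [] \<and> (\<forall>i. Suc i < length xs \<longrightarrow> E (xs ! i) (xs ! Suc i))"

definition connected_graph :: "('a \<Rightarrow> 'a \<Rightarrow> bool) \<Rightarrow> bool" where
  "connected_graph E \<longleftrightarrow> (\<forall>x y. \<exists>xs. walk E xs \<and> hd xs = x \<and> last xs = y)"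

definition gdist :: "('a \<Rightarrow> 'a \<Rightarrow> bool) \<Rightarrow> 'a \<Rightarrow> 'a \<Rightarrow> nat" where
  "gdist E x y = (LEAST n. \<exists>xs. walk E xs \<and> hd xs = x \<and> last xs = y \<and> length xs = Suc n)"

definition bounded_geometry :: "('a \<Rightarrow> 'a \<Rightarrow> bool) \<Rightarrow> bool" where
  "bounded_geometry E \<longleftrightarrow>
     (\<forall>r::nat. \<exists>N::nat. \<forall>x. finite {y. gdist E x y \<le> r} \<and> card {y. gdist E x y \<le> r} \<le> N)"

definition geodesic :: "('a \<Rightarrow> 'a \<Rightarrow> bool) \<Rightarrow> (nat \<Rightarrow> 'a) \<Rightarrow> 'a \<Rightarrow> 'a \<Rightarrow> bool" where
  "geodesic E g x y \<longleftrightarrow> g 0 = x \<and> g (gdist E x y) = y \<and>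
     (\<forall>i j. i \<le> gdist E x y \<longrightarrow> j \<le> gdist E x y \<longrightarrow>
        gdist E (g i) (g j) = nat \<bar>int i - int j\<bar>)"

definition rips_hyperbolic :: "('a \<Rightarrow> 'a \<Rightarrow> bool) \<Rightarrow> real \<Rightarrow> bool" where
  "rips_hyperbolic E \<delta> \<longleftrightarrow> \<delta> \<ge> 0 \<and>
     (\<forall>x y z gxy gyz gxz. geodesic E gxy x y \<and> geodesic E gyz y z \<and> geodesic E gxz x z \<longrightarrow>
        (\<forall>i \<le> gdist E x y. \<exists>j.
           (j \<le> gdist E y z \<and> real (gdist E (gxy i) (gyz j)) \<le> \<delta>) \<or>
           (j \<le> gdist E x z \<and> real (gdist E (gxy i) (gxz j)) \<le> \<delta>)))"

text \<open>The set F_{x,k,n}; the ball B(e;3 delta) is taken closed.\<close>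
definition Fset :: "('a \<Rightarrow> 'a \<Rightarrow> bool) \<Rightarrow> real \<Rightarrow> 'a \<Rightarrow> 'a \<Rightarrow> nat \<Rightarrow> nat \<Rightarrow> 'a set" where
  "Fset E \<delta> e x k n = {z. real (gdist E e z) > 3 * \<delta> \<and>
     (\<exists>y g t. gdist E x y \<le> k \<and> geodesic E g y e \<and>
        n \<le> t \<and> t \<le> 2 * n \<and> t \<le> gdist E y e \<and> z = g t)}"

definition Ffun :: "('a \<Rightarrow> 'a \<Rightarrow> bool) \<Rightarrow> real \<Rightarrow> 'a \<Rightarrow> 'a \<Rightarrow> nat \<Rightarrow> nat \<Rightarrow> 'a \<Rightarrow> real" where
  "Ffun E \<delta> e x k n = indicator (Fset E \<delta> e x k n)"

definition Hfun :: "('a \<Rightarrow> 'a \<Rightarrow> bool) \<Rightarrow> real \<Rightarrow> 'a \<Rightarrow> 'a \<Rightarrow> nat \<Rightarrow> 'a \<Rightarrow> real" where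
  "Hfun E \<delta> e x n = (\<lambda>z. (1 / real n) * (\<Sum>k\<in>{k::nat. real k \<le> real n / 4}. Ffun E \<delta> e x k n z))"

definition lp_norm_pow :: "real \<Rightarrow> ('a \<Rightarrow> real) \<Rightarrow> real" where
  "lp_norm_pow p f = (\<Sum>\<^sub>\<infinity>z. \<bar>f z\<bar> powr p)"

end

theory Submission
  imports Defs
begin

lemma infsum_support:
  fixes f :: "'a \<Rightarrow> real"
  assumes "finite A" "\<And>z. z \<notin> A \<Longrightarrow> f z = 0"
  shows "infsum f UNIV = sum f A"
proof -
  have "infsum f UNIV = infsum f A"
    by (rule infsum_cong_neutral) (use assms in auto)
  then show ?thesis using assms by simp
qed

lemma Kset_eq: "{k::nat. real k \<le> real n / 4} = {..n div 4}"
proof -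
  have "real k \<le> real n / 4 \<longleftrightarrow> 4 * k \<le> n" for k
  proof -
    have "real k \<le> real n / 4 \<longleftrightarrow> real (4 * k) \<le> real n" by (simp only: of_nat_mult of_nat_numeral) linarith
    then show ?thesis by (simp only: of_nat_le_iff)
  qed
  moreover have "4 * k \<le> n \<longleftrightarrow> k \<le> n div 4" for k
    using less_eq_div_iff_mult_less_eq[of 4 k n] by (simp add: mult.commute)
  ultimately show ?thesis by blast
qed

lemma walk_sub:
  assumes "walk E xs" "i \<le> j" "j < length xs"
  shows "walk E (map (\<lambda>k. xs ! (i + k)) [0..<Suc (j - i)]) \<and>
         hd (map (\<lambda>k. xs ! (i + k)) [0..<Suc (j - i)]) = xs ! i \<and>
         last (map (\<lambda>k. xs ! (i + k)) [0..<Suc (j - i)]) = xs ! j"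
proof -
  let ?l = "map (\<lambda>k. xs ! (i + k)) [0..<Suc (j - i)]"
  have w: "\<And>m. Suc m < length xs \<Longrightarrow> E (xs ! m) (xs ! Suc m)" using assms(1) by (auto simp: walk_def)
  have len: "length ?l = Suc (j - i)" by simp
  have nth: "\<And>k. k < Suc (j - i) \<Longrightarrow> ?l ! k = xs ! (i + k)"
    by (simp del: upt_Suc)
  have "walk E ?l" unfolding walk_def
  proof (intro conjI allI impI)
    show "?l \<noteq> []" by (simp del: upt_Suc)
  next
    fix m assume "Suc m < length ?l"
    then show "E (?l ! m) (?l ! Suc m)" using nth[of m] nth[of "Suc m"] assms w[of "i+m"] by (simp del: upt_Suc)
  qed
  moreover have "hd ?l = xs ! i" using nth[of 0] by (simp add: hd_conv_nth del: upt_Suc)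
  moreover have "last ?l = xs ! j" using nth[of "j - i"] assms by (simp add: last_conv_nth del: upt_Suc)
  ultimately show ?thesis by blast
qed

lemma walk_app: assumes "walk E xs" "walk E ys" "last xs = hd ys" shows "walk E (xs @ tl ys)"
  unfolding walk_def
proof (intro conjI allI impI)
  show "xs @ tl ys \<noteq> []" using assms by (simp add: walk_def)
next
  fix i assume i: "Suc i < length (xs @ tl ys)"
  have nx: "xs \<noteq> []" "ys \<noteq> []" using assms by (auto simp: walk_def)
  consider "Suc i < length xs" | "Suc i = length xs" | "Suc i > length xs" by linarith
  then show "E ((xs @ tl ys) ! i) ((xs @ tl ys) ! Suc i)"
  proof cases
    case 1 then show ?thesis using assms(1) by (auto simp: walk_def nth_append)
  next
    case 2
    then have ii: "i = length xs - 1" by simp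
    then have "(xs @ tl ys) ! i = ys ! 0" using assms(3) nx by (simp add: nth_append last_conv_nth hd_conv_nth)
    moreover have "(xs @ tl ys) ! Suc i = ys ! 1" using 2 i nx by (simp add: nth_append nth_tl)
    ultimately show ?thesis using assms(2) i 2 by (auto simp: walk_def)
  next
    case 3
    define m where "m = i - length xs"
    have m: "i = length xs + m" using 3 unfolding m_def by simp
    have "(xs @ tl ys) ! i = ys ! Suc m" using m nx i by (simp add: nth_append nth_tl)
    moreover have "(xs @ tl ys) ! Suc i = ys ! Suc (Suc m)" using m nx i by (simp add: nth_append nth_tl)
    ultimately show ?thesis using assms(2) i m by (auto simp: walk_def)
  qed
qed

context
  fixes E :: "'a \<Rightarrow> 'a \<Rightarrow> bool"
  assumes sg: "simplicial_graph E" and cg: "connected_graph E"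
begin

lemma gdist_wit: "\<exists>xs. walk E xs \<and> hd xs = x \<and> last xs = y \<and> length xs = Suc (gdist E x y)"
proof -
  obtain xs where "walk E xs" "hd xs = x" "last xs = y" using cg unfolding connected_graph_def by blast
  moreover have "length xs = Suc (length xs - 1)" using \<open>walk E xs\<close> by (cases xs) (auto simp: walk_def)
  ultimately have "\<exists>n xs. walk E xs \<and> hd xs = x \<and> last xs = y \<and> length xs = Suc n"
    by blast
  then show ?thesis unfolding gdist_def by (rule LeastI_ex)
qed

lemma gdist_le: assumes "walk E xs" "hd xs = x" "last xs = y" shows "gdist E x y \<le> length xs - 1"
  unfolding gdist_def
proof (rule Least_le)
  have "length xs = Suc (length xs - 1)" using assms(1) by (cases xs) (auto simp: walk_def)
  then show "\<exists>xsa. walk E xsa \<and> hd xsa = x \<and> last xsa = y \<and> length xsa = Suc (length xs - 1)"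
    using assms by blast
qed

lemma gdist_refl[simp]: "gdist E x x = 0"
  using gdist_le[of "[x]" x x] by (simp add: walk_def)

lemma walk_rev: assumes "walk E xs" shows "walk E (rev xs)"
  unfolding walk_def
proof (intro conjI allI impI)
  show "rev xs \<noteq> []" using assms by (simp add: walk_def)
  fix i assume i: "Suc i < length (rev xs)"
  define m where "m = length xs - Suc (Suc i)"
  have m1: "Suc m = length xs - Suc i" using i unfolding m_def by simp
  have "Suc m < length xs" using i m1 by simp
  then have "E (xs ! m) (xs ! Suc m)" using assms unfolding walk_def by blast
  then have "E (xs ! Suc m) (xs ! m)" using sg unfolding simplicial_graph_def by blast
  moreover have "rev xs ! i = xs ! Suc m" using i m1 by (simp add: rev_nth)
  moreover have "rev xs ! Suc i = xs ! m" using i unfolding m_def by (simp add: rev_nth)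
  ultimately show "E (rev xs ! i) (rev xs ! Suc i)" by simp
qed

lemma gdist_sym: "gdist E x y = gdist E y x"
proof -
  have "gdist E y x \<le> gdist E x y" for x y
  proof -
    obtain xs where xs: "walk E xs" "hd xs = x" "last xs = y" "length xs = Suc (gdist E x y)" using gdist_wit by blast
    have "gdist E y x \<le> length (rev xs) - 1"
      by (rule gdist_le) (use xs walk_rev in \<open>auto simp: hd_rev last_rev\<close>)
    then show ?thesis using xs by simp
  qed
  then show ?thesis by (simp add: le_antisym)
qed

lemma gdist_tri: "gdist E x z \<le> gdist E x y + gdist E y z"
proof -
  obtain xs where xs: "walk E xs" "hd xs = x" "last xs = y" "length xs = Suc (gdist E x y)" using gdist_wit by blast
  obtain ys where ys: "walk E ys" "hd ys = y" "last ys = z" "length ys = Suc (gdist E y z)" using gdist_wit by blast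
  have "walk E (xs @ tl ys)" using xs ys by (intro walk_app) simp_all
  moreover have "hd (xs @ tl ys) = x" using xs by (auto simp: walk_def)
  moreover have "last (xs @ tl ys) = z" using xs ys
    by (cases ys) (auto simp: walk_def last_append)
  ultimately have "gdist E x z \<le> length (xs @ tl ys) - 1" by (rule gdist_le)
  then show ?thesis using xs ys by simp
qed

lemma walk_nth_dist: "walk E xs \<Longrightarrow> i \<le> j \<Longrightarrow> j < length xs \<Longrightarrow> gdist E (xs ! i) (xs ! j) \<le> j - i"
proof -
  assume a: "walk E xs" "i \<le> j" "j < length xs"
  let ?l = "map (\<lambda>k. xs ! (i + k)) [0..<Suc (j - i)]"
  have "walk E ?l \<and> hd ?l = xs ! i \<and> last ?l = xs ! j" using walk_sub[OF a] .
  then have "gdist E (xs ! i) (xs ! j) \<le> length ?l - 1" using gdist_le by blast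
  then show ?thesis by (simp del: upt_Suc)
qed

lemma geod_exists: "\<exists>g. geodesic E g x y"
proof -
  obtain xs where xs: "walk E xs" "hd xs = x" "last xs = y" "length xs = Suc (gdist E x y)" using gdist_wit by blast
  define D where "D = gdist E x y"
  have ne: "xs \<noteq> []" using xs by auto
  have x0: "xs ! 0 = x" using xs ne by (simp add: hd_conv_nth)
  have yD: "xs ! D = y" using xs ne unfolding D_def by (simp add: last_conv_nth)
  have le: "gdist E (xs ! i) (xs ! j) = j - i" if "i \<le> j" "j \<le> D" for i j
  proof -
    have a: "gdist E (xs ! i) (xs ! j) \<le> j - i" using walk_nth_dist xs that unfolding D_def by simp
    have b: "gdist E x (xs ! i) \<le> i" using walk_nth_dist[of xs 0 i] xs that x0 unfolding D_def by simp
    have c: "gdist E (xs ! j) y \<le> D - j" using walk_nth_dist[of xs j D] xs that yD unfolding D_def by simp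
    have "D \<le> gdist E x (xs ! i) + gdist E (xs ! i) (xs ! j) + gdist E (xs ! j) y"
      using gdist_tri[of x "xs ! j" "xs ! i"] gdist_tri[of x y "xs ! j"] unfolding D_def by linarith
    then show ?thesis using a b c that by linarith
  qed
  have "geodesic E (\<lambda>i. xs ! i) x y" unfolding geodesic_def
  proof (intro conjI allI impI)
    show "xs ! 0 = x" by (rule x0)
    show "xs ! gdist E x y = y" using yD D_def by simp
  next
    fix i j assume "i \<le> gdist E x y" "j \<le> gdist E x y"
    then show "gdist E (xs ! i) (xs ! j) = nat \<bar>int i - int j\<bar>"
    proof (cases "i \<le> j")
      case True
      then show ?thesis using le[of i j] \<open>j \<le> gdist E x y\<close> unfolding D_def by simp
    next
      case False
      then have "gdist E (xs ! j) (xs ! i) = i - j" using le[of j i] \<open>i \<le> gdist E x y\<close> unfolding D_def by simp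
      then show ?thesis using False gdist_sym[of "xs ! i" "xs ! j"] by simp
    qed
  qed
  then show ?thesis by blast
qed

lemma geod_dist: "geodesic E g x y \<Longrightarrow> i \<le> gdist E x y \<Longrightarrow> j \<le> gdist E x y \<Longrightarrow> i \<le> j \<Longrightarrow>
   gdist E (g i) (g j) = j - i"
proof -
  assume a: "geodesic E g x y" "i \<le> gdist E x y" "j \<le> gdist E x y" "i \<le> j"
  then have "gdist E (g i) (g j) = nat \<bar>int i - int j\<bar>" unfolding geodesic_def by blast
  also have "\<dots> = j - i" using a(4) by simp
  finally show ?thesis .
qed

lemma geod_rev: assumes "geodesic E g x y" shows "geodesic E (\<lambda>i. g (gdist E x y - i)) y x"
  unfolding geodesic_def
proof (intro conjI allI impI)
  have s: "gdist E y x = gdist E x y" by (rule gdist_sym)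
  show "g (gdist E x y - 0) = y" using assms by (simp add: geodesic_def)
  show "g (gdist E x y - gdist E y x) = x" using assms s by (simp add: geodesic_def)
  fix i j assume ij: "i \<le> gdist E y x" "j \<le> gdist E y x"
  then have "gdist E (g (gdist E x y - i)) (g (gdist E x y - j)) =
     nat \<bar>int (gdist E x y - i) - int (gdist E x y - j)\<bar>" using assms s unfolding geodesic_def by simp
  also have "\<dots> = nat \<bar>int i - int j\<bar>" using ij s by (simp add: of_nat_diff abs_minus_commute)
  finally show "gdist E (g (gdist E x y - i)) (g (gdist E x y - j)) = nat \<bar>int i - int j\<bar>" .
qed

lemma geod_0: "geodesic E g x y \<Longrightarrow> s \<le> gdist E x y \<Longrightarrow> gdist E x (g s) = s"
  using geod_dist[of g x y 0 s] unfolding geodesic_def by simp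

lemma Fset_sub:
  assumes rh: "rips_hyperbolic E \<delta>" and h: "geodesic E h x e"
    and kn: "4 * k \<le> n" and z: "z \<in> Fset E \<delta> e x k n"
  shows "z \<in> {z. gdist E x z \<le> nat \<lceil>2*\<delta>\<rceil>} \<union> (\<Union>s\<in>{..3*n + nat \<lceil>\<delta>\<rceil>}. {z. gdist E (h s) z \<le> nat \<lceil>\<delta>\<rceil>})"
proof -
  obtain y g t where yk: "gdist E x y \<le> k" and g: "geodesic E g y e" and t: "n \<le> t" "t \<le> 2*n"
    "t \<le> gdist E y e" and zt: "z = g t"
    using z unfolding Fset_def by blast
  obtain c where c: "geodesic E c y x" using geod_exists by blast
  define D where "D = gdist E x e"
  have h': "geodesic E (\<lambda>i. h (D - i)) e x" using geod_rev[OF h] unfolding D_def .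
  have d0: "\<delta> \<ge> 0" using rh unfolding rips_hyperbolic_def by (rule conjunct1)
  have c1: "real (nat \<lceil>\<delta>\<rceil>) \<ge> \<delta>" using d0 by (simp add: of_nat_nat)
  have c2: "real (nat \<lceil>2*\<delta>\<rceil>) \<ge> 2*\<delta>" using d0 by (simp add: of_nat_nat)
  have R: "\<forall>x y z gxy gyz gxz. geodesic E gxy x y \<and> geodesic E gyz y z \<and> geodesic E gxz x z \<longrightarrow>
        (\<forall>i \<le> gdist E x y. \<exists>j.
           (j \<le> gdist E y z \<and> real (gdist E (gxy i) (gyz j)) \<le> \<delta>) \<or>
           (j \<le> gdist E x z \<and> real (gdist E (gxy i) (gxz j)) \<le> \<delta>))"
    using rh unfolding rips_hyperbolic_def by (rule conjunct2)
  have "\<exists>j.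
           (j \<le> gdist E e x \<and> real (gdist E (g t) (h (D - j))) \<le> \<delta>) \<or>
           (j \<le> gdist E y x \<and> real (gdist E (g t) (c j)) \<le> \<delta>)"
    using R[rule_format, of g y e "\<lambda>i. h (D - i)" x c t] g h' c t(3) by blast
  then obtain j where j: "(j \<le> gdist E e x \<and> real (gdist E z (h (D - j))) \<le> \<delta>) \<or>
           (j \<le> gdist E y x \<and> real (gdist E z (c j)) \<le> \<delta>)" using zt by blast
  have yz: "gdist E y z = t" using geod_0[OF g t(3)] zt by simp
  have kr: "4 * real k \<le> real n" using kn by linarith
  show ?thesis
  proof (cases "j \<le> gdist E e x \<and> real (gdist E z (h (D - j))) \<le> \<delta>")
    case True
    define s where "s = D - j"
    have sD: "s \<le> D" unfolding s_def by simp
    have xs: "gdist E x (h s) = s" using geod_0[OF h] sD unfolding D_def by simp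
    have "gdist E x (h s) \<le> gdist E x z + gdist E z (h s)" by (rule gdist_tri)
    moreover have "gdist E x z \<le> gdist E x y + gdist E y z" by (rule gdist_tri)
    ultimately have "real s \<le> real k + real t + \<delta>" using True xs yz yk unfolding s_def by linarith
    then have "real s \<le> real (3*n + nat \<lceil>\<delta>\<rceil>)" using t kr c1 by simp
    then have s1: "s \<in> {..3*n + nat \<lceil>\<delta>\<rceil>}" by (simp only: of_nat_le_iff atMost_iff)
    have "real (gdist E (h s) z) \<le> real (nat \<lceil>\<delta>\<rceil>)" using True gdist_sym[of z "h s"] c1 unfolding s_def
      by linarith
    then have "gdist E (h s) z \<le> nat \<lceil>\<delta>\<rceil>" by (simp only: of_nat_le_iff)
    then show ?thesis using s1 by blast
  next
    case False
    then have j2: "j \<le> gdist E y x" "real (gdist E z (c j)) \<le> \<delta>" using j by auto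
    have cj: "gdist E y (c j) = j" using geod_0[OF c j2(1)] .
    have cx: "gdist E (c j) x = gdist E y x - j" using geod_dist[OF c j2(1) order_refl j2(1)] c
      unfolding geodesic_def by simp
    have "gdist E y z \<le> gdist E y (c j) + gdist E (c j) z" by (rule gdist_tri)
    then have "real t \<le> real k + \<delta>" using yz cj j2 gdist_sym[of z "c j"] yk gdist_sym[of x y] by linarith
    then have kd: "real k \<le> \<delta> / 3" using t kr by linarith
    have "gdist E x z \<le> gdist E x (c j) + gdist E (c j) z" by (rule gdist_tri)
    then have "real (gdist E x z) \<le> 2 * \<delta>" using cx gdist_sym[of x "c j"] gdist_sym[of z "c j"] gdist_sym[of x y] yk j2 kd d0
      by linarith
    then have "real (gdist E x z) \<le> real (nat \<lceil>2*\<delta>\<rceil>)" using c2 by linarith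
    then have "gdist E x z \<le> nat \<lceil>2*\<delta>\<rceil>" by (simp only: of_nat_le_iff)
    then show ?thesis by blast
  qed
qed

end

theorem lemma3p5:
  fixes E :: "'a \<Rightarrow> 'a \<Rightarrow> bool" and \<delta> p :: real and e :: 'a
  assumes "simplicial_graph E" and "connected_graph E" and "bounded_geometry E"
    and "rips_hyperbolic E \<delta>" and "p \<ge> 1"
  shows "(\<exists>C. \<forall>x n. n \<ge> 1 \<longrightarrow> lp_norm_pow p (Hfun E \<delta> e x n) \<le> C * real n + C) \<and>
         (\<exists>C. \<forall>x n. n \<ge> 1 \<longrightarrow> gdist E x e \<ge> 2 * n \<longrightarrow>
              real n \<le> C * lp_norm_pow p (Hfun E \<delta> e x n) + C)"
proof -
  note sg = assms(1) and cg = assms(2) and rh = assms(4)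
  have p0: "p > 0" using assms(5) by simp
  have d0: "\<delta> \<ge> 0" using rh unfolding rips_hyperbolic_def by (rule conjunct1)
  define r0 where "r0 = nat \<lceil>2*\<delta>\<rceil>"
  define r1 where "r1 = nat \<lceil>\<delta>\<rceil>"
  obtain N0 where N0: "\<And>x. finite {y. gdist E x y \<le> r0} \<and> card {y. gdist E x y \<le> r0} \<le> N0"
    using assms(3) unfolding bounded_geometry_def by blast
  obtain N1 where N1: "\<And>x. finite {y. gdist E x y \<le> r1} \<and> card {y. gdist E x y \<le> r1} \<le> N1"
    using assms(3) unfolding bounded_geometry_def by blast
  define hh where "hh x = (SOME h. geodesic E h x e)" for x
  have hh: "geodesic E (hh x) x e" for x
    unfolding hh_def using geod_exists[OF sg cg] by (rule someI_ex)
  define T where "T x n = {z. gdist E x z \<le> r0} \<union> (\<Union>s\<in>{..3*n + r1}. {z. gdist E (hh x s) z \<le> r1})" for x n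
  have Tfin: "finite (T x n)" for x n unfolding T_def using N0 N1 by auto
  have Tcard: "card (T x n) \<le> N0 + (3*n + r1 + 1) * N1" for x n
  proof -
    have "card (\<Union>s\<in>{..3*n + r1}. {z. gdist E (hh x s) z \<le> r1}) \<le> (\<Sum>s\<in>{..3*n + r1}. card {z. gdist E (hh x s) z \<le> r1})"
      by (rule card_UN_le) simp
    also have "\<dots> \<le> (\<Sum>s\<in>{..3*n + r1}. N1)" by (rule sum_mono) (use N1 in blast)
    also have "\<dots> = (3*n + r1 + 1) * N1" by simp
    finally have "card (\<Union>s\<in>{..3*n + r1}. {z. gdist E (hh x s) z \<le> r1}) \<le> (3*n + r1 + 1) * N1" .
    moreover have "card {z. gdist E x z \<le> r0} \<le> N0" using N0 by blast
    ultimately show ?thesis unfolding T_def using card_Un_le by (meson add_le_mono le_trans)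
  qed
  have Kfin: "finite {k::nat. real k \<le> real n / 4}" for n unfolding Kset_eq by simp
  have Kcard: "card {k::nat. real k \<le> real n / 4} = n div 4 + 1" for n unfolding Kset_eq by simp
  have H0: "Hfun E \<delta> e x n z \<ge> 0" for x n z
    unfolding Hfun_def Ffun_def by (intro mult_nonneg_nonneg sum_nonneg) auto
  have H1: "Hfun E \<delta> e x n z \<le> 2" if "n \<ge> 1" for x n z
  proof -
    have "(\<Sum>k\<in>{k::nat. real k \<le> real n / 4}. Ffun E \<delta> e x k n z) \<le> (\<Sum>k\<in>{k::nat. real k \<le> real n / 4}. 1)"
      unfolding Ffun_def by (rule sum_mono) (simp add: indicator_def)
    also have "\<dots> = real (n div 4 + 1)" using Kcard by simp
    also have "\<dots> \<le> 2 * real n" using that by linarith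
    finally have "(\<Sum>k\<in>{k::nat. real k \<le> real n / 4}. Ffun E \<delta> e x k n z) \<le> 2 * real n" .
    then show ?thesis unfolding Hfun_def using that by (simp add: field_simps)
  qed
  have H2: "Hfun E \<delta> e x n z = 0" if "z \<notin> T x n" for x n z
  proof -
    have "Ffun E \<delta> e x k n z = 0" if k: "k \<in> {k::nat. real k \<le> real n / 4}" for k
    proof -
      have "4 * k \<le> n" using k unfolding Kset_eq by simp
      then have "Fset E \<delta> e x k n \<subseteq> T x n" unfolding T_def r0_def r1_def
        using Fset_sub[OF sg cg rh hh] by blast
      then show ?thesis unfolding Ffun_def using \<open>z \<notin> T x n\<close> by (auto simp: indicator_def)
    qed
    then show ?thesis unfolding Hfun_def by simp
  qed
  have HS: "lp_norm_pow p (Hfun E \<delta> e x n) = (\<Sum>z\<in>T x n. \<bar>Hfun E \<delta> e x n z\<bar> powr p)" for x n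
    unfolding lp_norm_pow_def using p0 by (intro infsum_support Tfin) (simp add: H2)
  define A where "A = N0 + (r1 + 1) * N1"
  define B where "B = 3 * N1"
  have part1: "\<exists>C. \<forall>x n. n \<ge> 1 \<longrightarrow> lp_norm_pow p (Hfun E \<delta> e x n) \<le> C * real n + C"
  proof (intro exI[of _ "2 powr p * real (A + B)"] allI impI)
    fix x :: 'a and n :: nat
    assume n1: "n \<ge> (1::nat)"
    have "\<forall>z\<in>T x n. \<bar>Hfun E \<delta> e x n z\<bar> powr p \<le> 2 powr p"
      using H0 H1[OF n1] p0 by (auto intro!: powr_mono2)
    then have S1: "(\<Sum>z\<in>T x n. \<bar>Hfun E \<delta> e x n z\<bar> powr p) \<le> real (card (T x n)) * 2 powr p"
      by (intro sum_bounded_above) blast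
    have "card (T x n) \<le> A + B * n" using Tcard[of x n] unfolding A_def B_def
      by (simp add: algebra_simps)
    then have "real (card (T x n)) \<le> real (A + B) * real n + real (A + B)" using n1
    proof -
      have "A + B * n \<le> (A + B) * n + (A + B)" by (simp add: algebra_simps)
      then have "card (T x n) \<le> (A + B) * n + (A + B)" using \<open>card (T x n) \<le> A + B * n\<close> by linarith
      then show ?thesis by (metis of_nat_add of_nat_le_iff of_nat_mult)
    qed
    then have "real (card (T x n)) * 2 powr p \<le> (real (A + B) * real n + real (A + B)) * 2 powr p"
      by (rule mult_right_mono) simp
    with S1 show "lp_norm_pow p (Hfun E \<delta> e x n) \<le> (2 powr p * real (A + B)) * real n + 2 powr p * real (A + B)"
      unfolding HS by (simp add: algebra_simps)
  qed
  define R where "R = nat \<lceil>3*\<delta>\<rceil>"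
  have R3: "real R \<ge> 3 * \<delta>" unfolding R_def using d0 by (simp add: of_nat_nat)
  define c where "c = (1/4::real) powr p"
  have c0: "c > 0" unfolding c_def by simp
  have part2: "\<exists>C. \<forall>x n. n \<ge> 1 \<longrightarrow> gdist E x e \<ge> 2 * n \<longrightarrow>
              real n \<le> C * lp_norm_pow p (Hfun E \<delta> e x n) + C"
  proof (intro exI[of _ "1 / c + real R"] allI impI)
    fix x :: 'a and n :: nat
    assume n1: "n \<ge> 1" and xe: "gdist E x e \<ge> 2 * n"
    define h where "h = hh x"
    define D where "D = gdist E x e"
    have h: "geodesic E h x e" unfolding h_def by (rule hh)
    have hD: "h D = e" using h unfolding geodesic_def D_def by simp
    define I where "I = {n..<2*n - R}"
    have tD: "t \<le> D" if "t \<in> I" for t using that xe unfolding I_def D_def by auto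
    have Hv: "Hfun E \<delta> e x n (h t) = real (n div 4 + 1) / real n" if t: "t \<in> I" for t
    proof -
      have et: "gdist E e (h t) = D - t"
        using geod_dist[OF sg cg h, of t D] tD[OF t] hD gdist_sym[OF sg cg, of e "h t"] unfolding D_def by simp
      have "t + R < 2 * n" using t unfolding I_def by auto
      then have "R < D - t" using xe unfolding D_def by linarith
      then have "real (gdist E e (h t)) > 3 * \<delta>" using et R3
        by (metis le_less_trans of_nat_less_iff)
      moreover have "n \<le> t" "t \<le> 2 * n" using t unfolding I_def by auto
      ultimately have "h t \<in> Fset E \<delta> e x k n" for k
      proof -
        have "gdist E x x \<le> k \<and> geodesic E h x e \<and> n \<le> t \<and> t \<le> 2 * n \<and> t \<le> gdist E x e \<and> h t = h t"
          using h tD[OF t] \<open>n \<le> t\<close> \<open>t \<le> 2 * n\<close> gdist_refl[OF sg cg, of x] unfolding D_def by simp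
        then show ?thesis unfolding Fset_def using \<open>real (gdist E e (h t)) > 3 * \<delta>\<close> by blast
      qed
      then have "(\<Sum>k\<in>{k::nat. real k \<le> real n / 4}. Ffun E \<delta> e x k n (h t)) = (\<Sum>k\<in>{k::nat. real k \<le> real n / 4}. 1)"
        unfolding Ffun_def by (intro sum.cong) auto
      then show ?thesis unfolding Hfun_def using Kcard by simp
    qed
    have Hq: "\<bar>Hfun E \<delta> e x n (h t)\<bar> powr p \<ge> c" if t: "t \<in> I" for t
    proof -
      have "n \<le> 4 * (n div 4 + 1)" using div_mult_mod_eq[of n 4] mod_less_divisor[of 4 n] by simp
      then have "real n \<le> real (4 * (n div 4 + 1))" by (simp only: of_nat_le_iff)
      then have "real n \<le> 4 * real (n div 4 + 1)" by simp
      then have q: "1/4 \<le> real (n div 4 + 1) / real n" using n1 by (simp add: field_simps)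
      show ?thesis unfolding c_def Hv[OF t] using q p0 by (intro powr_mono2) auto
    qed
    have inj: "inj_on h I"
    proof (rule inj_onI)
      fix a b assume a: "a \<in> I" and b: "b \<in> I" and ab: "h a = h b"
      have "gdist E (h a) (h b) = nat \<bar>int a - int b\<bar>" using h tD[OF a] tD[OF b] unfolding geodesic_def D_def by blast
      then show "a = b" using ab gdist_refl[OF sg cg, of "h b"] by simp
    qed
    have PT: "h ` I \<subseteq> T x n"
    proof
      fix z assume "z \<in> h ` I"
      then obtain t where t: "t \<in> I" "z = h t" by blast
      have "Hfun E \<delta> e x n z \<noteq> 0" using Hv[OF t(1)] t(2) n1 by simp
      then show "z \<in> T x n" using H2 by blast
    qed
    have "real (card I) * c \<le> (\<Sum>t\<in>I. \<bar>Hfun E \<delta> e x n (h t)\<bar> powr p)"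
      using sum_bounded_below[of I c "\<lambda>t. \<bar>Hfun E \<delta> e x n (h t)\<bar> powr p"] Hq by simp
    also have "\<dots> = (\<Sum>z\<in>h ` I. \<bar>Hfun E \<delta> e x n z\<bar> powr p)" using sum.reindex[OF inj, of "\<lambda>z. \<bar>Hfun E \<delta> e x n z\<bar> powr p"] by (simp add: comp_def)
    also have "\<dots> \<le> (\<Sum>z\<in>T x n. \<bar>Hfun E \<delta> e x n z\<bar> powr p)"
      by (rule sum_mono2[OF Tfin PT]) simp
    finally have L: "real (card I) * c \<le> lp_norm_pow p (Hfun E \<delta> e x n)" unfolding HS .
    have cI: "real (card I) \<ge> real n - real R" unfolding I_def by simp
    have L0: "lp_norm_pow p (Hfun E \<delta> e x n) \<ge> 0" unfolding HS by (simp add: sum_nonneg)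
    have "(real n - real R) * c \<le> lp_norm_pow p (Hfun E \<delta> e x n)"
      using L cI c0 by (smt (verit) mult_right_mono)
    then have "real n \<le> lp_norm_pow p (Hfun E \<delta> e x n) / c + real R" using c0 by (simp add: field_simps)
    also have "\<dots> \<le> (1 / c + real R) * lp_norm_pow p (Hfun E \<delta> e x n) + (1 / c + real R)"
      using L0 c0 by (simp add: algebra_simps)
    finally show "real n \<le> (1 / c + real R) * lp_norm_pow p (Hfun E \<delta> e x n) + (1 / c + real R)" .
  qed
  show ?thesis using part1 part2 by blast
qed

end
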